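(* Let $n\ge2$. Every continuous normalized Lie quasi-state $\zeta:\mathfrak{g}_n\to\mathbb{R}$ on the unitary motion algebra $\mathfrak{g}_n=\mathbb{C}^n\rtimes\mathfrak{u}(n)$ is identically zero. Consequently every continuous Lie quasi-state on $\mathfrak{g}_n$ has the form $\zeta(v,X)=\psi(v)+\eta(X)$ with $\psi$ a real-linear functional on $\mathbb{C}^n$ and $\eta$ a continuous Lie quasi-state on $\mathfrak{u}(n)$.
   Context: $\mathfrak{g}_n$ is the real Lie algebra $\mathbb{C}^n\times\mathfrak{u}(n)$ with bracket $[(v,X),(w,Y)]=(Xw-Yv,[X,Y])$. A Lie quasi-state is $\zeta$ with $\zeta(aA+bB)=a\zeta(A)+b\zeta(B)$ for all $a,b\in\mathbb{R}$ and commuting $A,B$; it is normalized if $\zeta(v,0)=\zeta(0,X)=0$ for all $v\in\mathbb{C}^n$, $X\in\mathfrak{u}(n)$. *)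

theory Defs
  imports "HOL-Analysis.Analysis"
begin

definition un :: "(complex^'n^'n) set" where
  "un = {X. \<forall>i j. X $ i $ j = - cnj (X $ j $ i)}"

definition gn :: "((complex^'n) \<times> (complex^'n^'n)) set" where
  "gn = UNIV \<times> un"

definition gbracket ::
  "((complex^'n) \<times> (complex^'n^'n)) \<Rightarrow> ((complex^'n) \<times> (complex^'n^'n))
     \<Rightarrow> ((complex^'n) \<times> (complex^'n^'n))" where
  "gbracket A B = (snd A *v fst B - snd B *v fst A, snd A ** snd B - snd B ** snd A)"

definition lie_quasi_state :: "'a set \<Rightarrow> ('a \<Rightarrow> 'a \<Rightarrow> 'a::real_vector) \<Rightarrow> ('a \<Rightarrow> real) \<Rightarrow> bool" where
  "lie_quasi_state L br \<zeta> \<longleftrightarrow>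
     (\<forall>A\<in>L. \<forall>B\<in>L. br A B = 0 \<longrightarrow>
        (\<forall>a b::real. \<zeta> (a *\<^sub>R A + b *\<^sub>R B) = a * \<zeta> A + b * \<zeta> B))"

definition ubracket :: "complex^'n^'n \<Rightarrow> complex^'n^'n \<Rightarrow> complex^'n^'n" where
  "ubracket X Y = X ** Y - Y ** X"

end

theory Submission
  imports Defs
begin

definition hp :: "complex^'n \<Rightarrow> complex^'n \<Rightarrow> complex" where
  "hp x y = (\<Sum>k\<in>UNIV. cnj (x$k) * y$k)"

definition ip :: "complex^'n \<Rightarrow> complex^'n^'n" where
  "ip x = (\<chi> i j. \<i> * (x$i * cnj (x$j)) / hp x x)"

lemma hp_self: "hp x x = complex_of_real ((norm x)^2)"
proof -
  have "(norm x)^2 = (\<Sum>k\<in>UNIV. (cmod (x$k))^2)"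
    unfolding norm_vec_def L2_set_def by (simp add: sum_nonneg)
  moreover have "\<And>k. x$k * cnj (x$k) = complex_of_real ((cmod (x$k))^2)"
    using complex_norm_square by (metis of_real_power)
  ultimately show ?thesis unfolding hp_def
    by (simp add: mult.commute)
qed

lemma hp_self_zero: "hp x x = 0 \<longleftrightarrow> x = 0"
  by (simp add: hp_self)

lemma hp_cnj: "hp y x = cnj (hp x y)"
  unfolding hp_def by (simp add: mult.commute)

lemma hp_add2: "hp x (y + z) = hp x y + hp x z"
  unfolding hp_def by (simp add: distrib_left sum.distrib)
lemma hp_add1: "hp (x + y) z = hp x z + hp y z"
  unfolding hp_def by (simp add: distrib_right sum.distrib)
lemma hp_diff2: "hp x (y - z) = hp x y - hp x z"
  unfolding hp_def by (simp add: right_diff_distrib sum_subtractf)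
lemma hp_diff1: "hp (x - y) z = hp x z - hp y z"
  unfolding hp_def by (simp add: left_diff_distrib sum_subtractf)
lemma hp_neg2: "hp x (- y) = - hp x y"
  unfolding hp_def by (simp add: sum_negf)
lemma hp_neg1: "hp (- x) y = - hp x y"
  unfolding hp_def by (simp add: sum_negf)
lemma hp_smult2: "hp x (c *s y) = c * hp x y"
  unfolding hp_def by (simp add: sum_distrib_left algebra_simps)
lemma hp_smult1: "hp (c *s x) y = cnj c * hp x y"
  unfolding hp_def by (simp add: sum_distrib_left algebra_simps)
lemma hp_scaleR2: "hp x (c *\<^sub>R y) = of_real c * hp x y"
  unfolding hp_def vector_scaleR_component by (simp add: sum_distrib_left algebra_simps scaleR_conv_of_real)
lemma hp_scaleR1: "hp (c *\<^sub>R x) y = of_real c * hp x y"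
  unfolding hp_def vector_scaleR_component by (simp add: sum_distrib_left algebra_simps scaleR_conv_of_real)
lemma hp_zero1[simp]: "hp 0 y = 0" unfolding hp_def by simp
lemma hp_zero2[simp]: "hp x 0 = 0" unfolding hp_def by simp

lemmas hp_simps = hp_add1 hp_add2 hp_diff1 hp_diff2 hp_neg1 hp_neg2 hp_smult1 hp_smult2
  hp_scaleR1 hp_scaleR2

lemma ip_mult: "ip x *v y = (\<i> * hp x y / hp x x) *s x"
  unfolding ip_def matrix_vector_mult_def hp_def
  by (simp add: vec_eq_iff sum_divide_distrib sum_distrib_left algebra_simps)

lemma ip_orth: "hp x y = 0 \<Longrightarrow> ip x *v y = 0"
  by (simp add: ip_mult)

lemma ip_self: "x \<noteq> 0 \<Longrightarrow> ip x *v x = \<i> *s x"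
  by (simp add: ip_mult hp_self_zero)

lemma hp_self_real: "cnj (hp x x) = hp x x"
  by (simp add: hp_self)

lemma ip_un: "ip x \<in> un"
  unfolding un_def ip_def using hp_self_real[of x]
  by (simp add: mult.commute)

lemma ip_prod_zero: "hp x y = 0 \<Longrightarrow> ip x ** ip y = 0"
proof -
  assume h: "hp x y = 0"
  have "(ip x ** ip y) $ i $ j = (- (x$i * cnj (y$j)) / (hp x x * hp y y)) * hp x y" for i j
    unfolding ip_def matrix_matrix_mult_def hp_def
    by (simp add: sum_distrib_left sum_divide_distrib algebra_simps sum_negf)
  then show ?thesis using h by (simp add: vec_eq_iff)
qed

lemma ip_smult: assumes "c \<noteq> 0" shows "ip (c *s x) = ip x"
proof -
  have "cnj c * c \<noteq> 0" using assms by simp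
  then show ?thesis
    unfolding ip_def by (simp add: vec_eq_iff hp_smult1 hp_smult2 field_simps)
qed

lemma ip_neg: "ip (- x) = ip x"
proof -
  have "- x = (-1) *s x" by (simp add: vec_eq_iff)
  then show ?thesis using ip_smult[of "-1" x] by simp
qed

lemma ip_scaleR: "t \<noteq> 0 \<Longrightarrow> ip (t *\<^sub>R x) = ip x"
proof -
  assume t: "t \<noteq> 0"
  have "t *\<^sub>R x = (complex_of_real t) *s x" unfolding vec_eq_iff vector_scaleR_component
    by (simp add: scaleR_conv_of_real)
  then show ?thesis using ip_smult[of "complex_of_real t" x] t by simp
qed

lemma ip_sum:
  assumes o: "hp a b = 0" and e: "hp a a = hp b b"
  shows "ip a + ip b = ip (a + b) + ip (a - b)"
proof -
  have o2: "hp b a = 0" using o hp_cnj[of b a] by simp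
  have s1: "hp (a+b) (a+b) = 2 * hp a a" using o o2 e by (simp add: hp_simps)
  have s2: "hp (a-b) (a-b) = 2 * hp a a" using o o2 e by (simp add: hp_simps)
  show ?thesis
  proof (cases "hp a a = 0")
    case True
    then have "a = 0" "b = 0" using e hp_self_zero by metis+
    then show ?thesis by (simp add: ip_def)
  next
    case False
    have key: "(a$i+b$i)*cnj(a$j+b$j) + (a$i-b$i)*cnj(a$j-b$j) = 2*(a$i*cnj(a$j) + b$i*cnj(b$j))" for i j
      by (simp add: algebra_simps)
    have "\<i> * (a$i * cnj (a$j)) / hp a a + \<i> * (b$i * cnj (b$j)) / hp a a =
          \<i> * ((a$i+b$i)*cnj(a$j+b$j)) / (2 * hp a a) + \<i> * ((a$i-b$i)*cnj(a$j-b$j)) / (2 * hp a a)" for i j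
    proof -
      have "\<i> * ((a$i+b$i)*cnj(a$j+b$j)) / (2 * hp a a) + \<i> * ((a$i-b$i)*cnj(a$j-b$j)) / (2 * hp a a)
        = \<i> * ((a$i+b$i)*cnj(a$j+b$j) + (a$i-b$i)*cnj(a$j-b$j)) / (2 * hp a a)"
        by (simp add: add_divide_distrib distrib_left)
      also have "\<dots> = \<i> * (a$i * cnj (a$j)) / hp a a + \<i> * (b$i * cnj (b$j)) / hp a a"
        unfolding key using False by (simp add: field_simps)
      finally show ?thesis by simp
    qed
    then show ?thesis unfolding ip_def s1 s2 using e by (simp add: vec_eq_iff)
  qed
qed

lemma unD: "X \<in> un \<Longrightarrow> X$i$j = - cnj (X$j$i)"
  unfolding un_def by blast
lemma unI: "(\<And>i j. X$i$j = - cnj (X$j$i)) \<Longrightarrow> X \<in> un"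
  unfolding un_def by blast
lemma un_add: "X \<in> un \<Longrightarrow> Y \<in> un \<Longrightarrow> X + Y \<in> un"
proof (rule unI)
  fix i j assume "X \<in> un" "Y \<in> un"
  then have "X$i$j = - cnj (X$j$i)" "Y$i$j = - cnj (Y$j$i)" by (blast intro: unD)+
  then show "(X + Y)$i$j = - cnj ((X + Y)$j$i)" by simp
qed
lemma un_diff: "X \<in> un \<Longrightarrow> Y \<in> un \<Longrightarrow> X - Y \<in> un"
proof (rule unI)
  fix i j assume "X \<in> un" "Y \<in> un"
  then have "X$i$j = - cnj (X$j$i)" "Y$i$j = - cnj (Y$j$i)" by (blast intro: unD)+
  then show "(X - Y)$i$j = - cnj ((X - Y)$j$i)" by simp
qed
lemma un_neg: "X \<in> un \<Longrightarrow> - X \<in> un"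
proof (rule unI)
  fix i j assume "X \<in> un"
  then have "X$i$j = - cnj (X$j$i)" by (blast intro: unD)+
  then show "(- X)$i$j = - cnj ((- X)$j$i)" by simp
qed
lemma un_scaleR: "X \<in> un \<Longrightarrow> c *\<^sub>R X \<in> un"
proof (rule unI)
  fix i j assume "X \<in> un"
  then have "X$i$j = - cnj (X$j$i)" by (blast intro: unD)+
  then show "(c *\<^sub>R X)$i$j = - cnj ((c *\<^sub>R X)$j$i)" unfolding vector_scaleR_component by (simp add: scaleR_conv_of_real)
qed
lemma un_zero: "0 \<in> un"
  by (rule unI) simp

lemma gbracket_self: "gbracket A A = 0"
  unfolding gbracket_def by (simp add: zero_prod_def)

lemma skew_hp: assumes "X \<in> un" shows "hp (X *v x) y = - hp x (X *v y)"
proof -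
  have X: "cnj (X$i$j) = - X$j$i" for i j
  proof -
    have "X$j$i = - cnj (X$i$j)" by (rule unD[OF assms])
    then show ?thesis by simp
  qed
  have "hp (X *v x) y = (\<Sum>k\<in>UNIV. \<Sum>j\<in>UNIV. cnj (X$k$j) * cnj (x$j) * y$k)"
    unfolding hp_def matrix_vector_mult_def by (simp add: sum_distrib_right)
  also have "\<dots> = (\<Sum>j\<in>UNIV. \<Sum>k\<in>UNIV. cnj (X$k$j) * cnj (x$j) * y$k)"
    by (rule sum.swap)
  also have "\<dots> = - hp x (X *v y)"
    unfolding hp_def matrix_vector_mult_def
    by (simp add: sum_distrib_left sum_negf[symmetric] X algebra_simps)
  finally show ?thesis .
qed

lemma gn_iff[simp]: "(v, X) \<in> gn \<longleftrightarrow> X \<in> un"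
  unfolding gn_def by simp

lemma gbr_ip:
  assumes "hp x y = 0" "hp x t = 0" "hp y s = 0"
  shows "gbracket (s, ip x) (t, ip y) = 0"
proof -
  have "hp y x = 0" using assms(1) hp_cnj[of y x] by simp
  then show ?thesis using assms unfolding gbracket_def
    by (simp add: ip_orth ip_prod_zero zero_prod_def)
qed

locale qs =
  fixes \<zeta> :: "(complex^'n) \<times> (complex^'n^'n) \<Rightarrow> real"
  assumes cont: "continuous_on gn \<zeta>"
    and lqs: "lie_quasi_state gn gbracket \<zeta>"
    and nrm1: "\<And>v. \<zeta> (v, 0) = 0"
    and nrm2: "\<And>X. X \<in> un \<Longrightarrow> \<zeta> (0, X) = 0"
begin

lemma qs_add: "A \<in> gn \<Longrightarrow> B \<in> gn \<Longrightarrow> gbracket A B = 0 \<Longrightarrow> \<zeta> (A + B) = \<zeta> A + \<zeta> B"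
  using lqs unfolding lie_quasi_state_def
  by (metis mult_1 scaleR_one)

lemma qs_scale: "A \<in> gn \<Longrightarrow> \<zeta> (c *\<^sub>R A) = c * \<zeta> A"
  using lqs gbracket_self[of A] unfolding lie_quasi_state_def
  by (metis add.right_neutral mult_zero_left scaleR_zero_left)

lemma split_ip:
  assumes "hp x y = 0" "hp x t = 0" "hp y s = 0"
  shows "\<zeta> (s + t, ip x + ip y) = \<zeta> (s, ip x) + \<zeta> (t, ip y)"
  using qs_add[of "(s, ip x)" "(t, ip y)"] gbr_ip[OF assms] by (simp add: ip_un)

definition h where "h v = \<zeta> (v, ip v)"

lemma OA:
  assumes o: "hp a b = 0" and e: "hp a a = hp b b"
  shows "h (a + b) = h a + h b"
proof -
  have o2: "hp b a = 0" using o hp_cnj[of b a] by simp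
  have 1: "\<zeta> (a + b, ip a + ip b) = h a + h b"
    using split_ip[of a b b a] o o2 unfolding h_def by simp
  have o3: "hp (a+b) (a-b) = 0" "hp (a-b) (a+b) = 0" using o o2 e by (simp_all add: hp_simps)
  have 2: "\<zeta> (a + b + 0, ip (a+b) + ip (a-b)) = h (a+b) + \<zeta> (0, ip (a - b))"
    using split_ip[of "a+b" "a-b" 0 "a+b"] o3 unfolding h_def by simp
  show ?thesis using 1 2 ip_sum[OF o e] nrm2[OF ip_un] by simp
qed

lemma D:
  assumes o: "hp a b = 0" and e: "hp a a = hp b b"
  shows "h (2 *\<^sub>R a) = 2 * h a + h b + h (- b)"
proof -
  have o2: "hp b a = 0" using o hp_cnj[of b a] by simp
  have o3: "hp (a+b) (a-b) = 0" using o o2 e by (simp_all add: hp_simps)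
  have e3: "hp (a+b) (a+b) = hp (a-b) (a-b)" using o o2 e by (simp_all add: hp_simps)
  have "2 *\<^sub>R a = (a + b) + (a - b)" by (simp add: scaleR_2)
  then have "h (2 *\<^sub>R a) = h (a + b) + h (a - b)" using OA[OF o3 e3] by simp
  moreover have "h (a + b) = h a + h b" using OA[OF o e] .
  moreover have "h (a + - b) = h a + h (- b)" using OA[of a "- b"] o e by (simp add: hp_simps)
  ultimately show ?thesis by simp
qed

end

lemma two_idx:
  fixes dummy :: "'n::finite"
  assumes "CARD('n) \<ge> 2"
  obtains i j :: 'n where "i \<noteq> j"
proof -
  have "\<not> card (UNIV::'n set) \<le> Suc 0" using assms by simp
  then have "\<not> (\<forall>a\<in>(UNIV::'n set). \<forall>b\<in>UNIV. a = b)"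
    using card_le_Suc0_iff_eq[of "UNIV::'n set"] by simp
  then show ?thesis using that by blast
qed

lemma partner0:
  assumes "CARD('n::finite) \<ge> 2"
  shows "\<exists>b::complex^'n. b \<noteq> 0 \<and> hp a b = 0"
proof -
  obtain i j :: 'n where ij: "i \<noteq> j" using two_idx[OF assms] by blast
  show ?thesis
  proof (cases "a$i = 0 \<and> a$j = 0")
    case True
    have "hp a (axis i 1) = cnj (a$i)"
      unfolding hp_def axis_def by (simp add: if_distrib cong: if_cong)
    moreover have "axis i (1::complex) \<noteq> 0" by (simp add: axis_def vec_eq_iff)
    ultimately show ?thesis using True by (intro exI[of _ "axis i 1"]) auto
  next
    case False
    define b :: "complex^'n" where "b = (\<chi> k. (if k = i then - cnj (a$j) else 0) + (if k = j then cnj (a$i) else 0))"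
    have d: "(\<Sum>k\<in>UNIV. f k * (if k = m then c else 0)) = f m * (c::complex)" for f and m :: 'n and c
    proof -
      have "(\<Sum>k\<in>UNIV. f k * (if k = m then c else 0)) = (\<Sum>k\<in>UNIV. (if k = m then f k * c else 0))"
        by (rule sum.cong) auto
      also have "\<dots> = f m * c" using sum.delta[of UNIV m "\<lambda>k. f k * c"] by simp
      finally show ?thesis .
    qed
    have "hp a b = (\<Sum>k\<in>UNIV. cnj (a$k) * (if k = i then - cnj (a$j) else 0)) + (\<Sum>k\<in>UNIV. cnj (a$k) * (if k = j then cnj (a$i) else 0))"
      unfolding hp_def b_def by (simp only: vec_lambda_beta distrib_left sum.distrib)
    also have "\<dots> = 0" unfolding d by simp
    finally have "hp a b = 0" .
    moreover have "b \<noteq> 0"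
    proof
      assume "b = 0"
      then have "b$i = 0" "b$j = 0" by simp_all
      then show False using False ij unfolding b_def by auto
    qed
    ultimately show ?thesis by blast
  qed
qed

lemma partner:
  assumes "CARD('n::finite) \<ge> 2" "(a::complex^'n) \<noteq> 0"
  shows "\<exists>b. hp a b = 0 \<and> hp b b = hp a a"
proof -
  obtain b0 where b0: "b0 \<noteq> 0" "hp a b0 = 0" using partner0[OF assms(1)] by blast
  define b where "b = (norm a / norm b0) *\<^sub>R b0"
  have "hp a b = 0" unfolding b_def using b0 by (simp add: hp_scaleR2)
  moreover have "hp b b = hp a a" unfolding b_def using b0
    by (simp add: hp_scaleR1 hp_scaleR2 hp_self power2_eq_square)
  ultimately show ?thesis by blast
qed

context qs begin

lemma h0: "h 0 = 0"
  unfolding h_def using nrm2[OF ip_un] by simp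

lemma growth: "(\<lambda>k. h ((2^k) *\<^sub>R a) / 2^k) \<longlonglongrightarrow> 0"
proof -
  have eq: "h ((2^k) *\<^sub>R a) / 2^k = \<zeta> (a, inverse (2^k) *\<^sub>R ip a)" for k :: nat
  proof -
    have "((2::real)^k *\<^sub>R a, ip a) = (2^k) *\<^sub>R (a, inverse (2^k) *\<^sub>R ip a)"
      by simp
    then have "h ((2^k) *\<^sub>R a) = 2^k * \<zeta> (a, inverse (2^k) *\<^sub>R ip a)"
      unfolding h_def using ip_scaleR[of "2^k" a] qs_scale[of "(a, inverse (2^k) *\<^sub>R ip a)" "2^k"]
      by (simp add: ip_un un_scaleR)
    then show ?thesis by simp
  qed
  have lim: "(\<lambda>k::nat. (a, inverse ((2::real)^k) *\<^sub>R ip a)) \<longlonglongrightarrow> (a, 0)"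
    using tendsto_Pair[OF tendsto_const tendsto_scaleR[OF LIMSEQ_inverse_realpow_zero[of 2] tendsto_const[of "ip a"]]]
    by simp
  have "(\<lambda>k::nat. \<zeta> (a, inverse ((2::real)^k) *\<^sub>R ip a)) \<longlonglongrightarrow> \<zeta> (a, 0)"
    by (rule continuous_on_tendsto_compose[OF cont lim]) (simp_all add: un_zero un_scaleR ip_un)
  then show ?thesis unfolding eq using nrm1 by simp
qed

end

locale qs2 = qs \<zeta> for \<zeta> :: "(complex^'n) \<times> (complex^'n^'n) \<Rightarrow> real" +
  assumes card: "CARD('n) \<ge> 2"
begin

lemma E2: assumes "a \<noteq> 0"
  shows "h (2 *\<^sub>R a) - h (- (2 *\<^sub>R a)) = 2 * (h a - h (- a))"
proof -
  obtain b where b: "hp a b = 0" "hp b b = hp a a" using partner[OF card assms] by blast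
  have 1: "h (2 *\<^sub>R a) = 2 * h a + h b + h (- b)" using D[of a b] b by simp
  have 2: "h (2 *\<^sub>R (- a)) = 2 * h (- a) + h b + h (- b)" using D[of "- a" b] b by (simp add: hp_simps)
  show ?thesis using 1 2 by simp
qed

lemma Epow: assumes "a \<noteq> 0"
  shows "h ((2^k) *\<^sub>R a) - h (- ((2^k) *\<^sub>R a)) = 2^k * (h a - h (- a))"
proof (induction k)
  case 0 then show ?case by simp
next
  case (Suc k)
  have nz: "(2::real)^k *\<^sub>R a \<noteq> 0" using assms by simp
  have "(2::real)^(Suc k) *\<^sub>R a = 2 *\<^sub>R ((2^k) *\<^sub>R a)" by simp
  then show ?case using E2[OF nz] Suc by simp
qed

lemma even: "h (- a) = h a"
proof (cases "a = 0")
  case True then show ?thesis by simp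
next
  case False
  have "(\<lambda>k. h ((2^k) *\<^sub>R a) / 2^k - h ((2^k) *\<^sub>R (- a)) / 2^k) \<longlonglongrightarrow> 0 - 0"
    by (intro tendsto_diff growth)
  moreover have "h ((2^k) *\<^sub>R a) / 2^k - h ((2^k) *\<^sub>R (- a)) / 2^k = h a - h (- a)" for k :: nat
    using Epow[OF False, of k] by (simp add: diff_divide_distrib[symmetric])
  ultimately have "(\<lambda>k::nat. h a - h (- a)) \<longlonglongrightarrow> 0" by simp
  then have "h a - h (- a) = 0" using LIMSEQ_const_iff by blast
  then show ?thesis by simp
qed

lemma vanish: "h v = 0"
proof (cases "v = 0")
  case True then show ?thesis using h0 by simp
next
  case False
  define a where "a = (1/2::real) *\<^sub>R v"
  have a: "a \<noteq> 0" "v = 2 *\<^sub>R a" using False unfolding a_def by simp_all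
  obtain b where b: "hp a b = 0" "hp b b = hp a a" using partner[OF card a(1)] by blast
  have step: "h ((2^(Suc k)) *\<^sub>R a) + h ((2^(Suc k)) *\<^sub>R b) = 4 * (h ((2^k) *\<^sub>R a) + h ((2^k) *\<^sub>R b))" for k :: nat
  proof -
    define x where "x = (2::real)^k *\<^sub>R a"
    define y where "y = (2::real)^k *\<^sub>R b"
    have o: "hp x y = 0" "hp y x = 0" "hp x x = hp y y"
      unfolding x_def y_def using b hp_cnj[of b a] by (simp_all add: hp_simps)
    have "h (2 *\<^sub>R x) = 2 * h x + h y + h (- y)" using D[of x y] o by simp
    moreover have "h (2 *\<^sub>R y) = 2 * h y + h x + h (- x)" using D[of y x] o by simp
    moreover have "(2::real)^(Suc k) *\<^sub>R a = 2 *\<^sub>R x" "(2::real)^(Suc k) *\<^sub>R b = 2 *\<^sub>R y"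
      unfolding x_def y_def by simp_all
    ultimately show ?thesis using even[of x] even[of y] unfolding x_def y_def by simp
  qed
  define S where "S = h a + h b"
  have Sk: "h ((2^k) *\<^sub>R a) + h ((2^k) *\<^sub>R b) = 4^k * S" for k :: nat
  proof (induction k)
    case 0 then show ?case by (simp add: S_def)
  next
    case (Suc k)
    have "h ((2^(Suc k)) *\<^sub>R a) + h ((2^(Suc k)) *\<^sub>R b) = 4 * (h ((2^k) *\<^sub>R a) + h ((2^k) *\<^sub>R b))"
      by (rule step)
    also have "\<dots> = 4 * (4^k * S)" using Suc.IH by simp
    also have "\<dots> = 4^(Suc k) * S" by simp
    finally show ?case .
  qed
  have lim: "(\<lambda>k. h ((2^k) *\<^sub>R a) / 2^k + h ((2^k) *\<^sub>R b) / 2^k) \<longlonglongrightarrow> 0 + 0"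
    by (intro tendsto_add growth)
  have eq: "h ((2^k) *\<^sub>R a) / 2^k + h ((2^k) *\<^sub>R b) / 2^k = 2^k * S" for k :: nat
  proof -
    have "h ((2^k) *\<^sub>R a) / 2^k + h ((2^k) *\<^sub>R b) / 2^k = 4^k * S / 2^k"
      using Sk[of k] by (simp add: add_divide_distrib[symmetric])
    also have "(4::real)^k = 2^k * 2^k" by (simp add: power_mult_distrib[symmetric])
    finally show ?thesis by simp
  qed
  have lim2: "(\<lambda>k::nat. \<bar>2^k * S\<bar>) \<longlonglongrightarrow> 0" using tendsto_rabs[OF lim] unfolding eq by simp
  have ge: "\<bar>S\<bar> \<le> \<bar>2^k * S\<bar>" for k :: nat
  proof -
    have "(1::real) \<le> 2^k" by simp
    then show ?thesis by (simp add: abs_mult mult_le_cancel_right1)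
  qed
  have "\<bar>S\<bar> \<le> 0" by (rule LIMSEQ_le_const[OF lim2]) (use ge in blast)
  then have S0: "S = 0" by simp
  have "h (2 *\<^sub>R a) = 2 * h a + h b + h (- b)" using D[of a b] b by simp
  then show ?thesis using a(2) even[of b] S0 unfolding S_def by simp
qed

end

lemma mv_add: "(X::complex^'n^'m) *v (x + y) = X *v x + X *v y"
  unfolding matrix_vector_mult_def by (simp add: vec_eq_iff distrib_left sum.distrib)
lemma mv_scaleR: "(X::complex^'n^'m) *v (c *\<^sub>R x) = c *\<^sub>R (X *v x)"
  unfolding matrix_vector_mult_def vec_eq_iff vector_scaleR_component
  by (simp add: scaleR_conv_of_real sum_distrib_left algebra_simps)
lemma mv_smult: "(X::complex^'n^'m) *v (c *s x) = c *s (X *v x)"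
  unfolding matrix_vector_mult_def by (simp add: vec_eq_iff sum_distrib_left algebra_simps)
lemma mv_diff: "(X::complex^'n^'m) *v (x - y) = X *v x - X *v y"
  unfolding matrix_vector_mult_def by (simp add: vec_eq_iff right_diff_distrib sum_subtractf)
lemma mv_zero: "(X::complex^'n^'m) *v 0 = 0"
  unfolding matrix_vector_mult_def by (simp add: vec_eq_iff)
lemma mv_neg_mat: "(- X::complex^'n^'m) *v x = - (X *v x)"
  unfolding matrix_vector_mult_def by (simp add: vec_eq_iff sum_negf)
lemma mv_diff_mat: "(X - Y::complex^'n^'m) *v x = X *v x - Y *v x"
  unfolding matrix_vector_mult_def by (simp add: vec_eq_iff left_diff_distrib sum_subtractf)
lemma mv_add_mat: "(X + Y::complex^'n^'m) *v x = X *v x + Y *v x"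
  unfolding matrix_vector_mult_def by (simp add: vec_eq_iff distrib_right sum.distrib)
lemma mv_scaleR_mat: "(c *\<^sub>R X::complex^'n^'m) *v x = c *\<^sub>R (X *v x)"
  unfolding matrix_vector_mult_def vec_eq_iff vector_scaleR_component
  by (simp add: scaleR_conv_of_real sum_distrib_left algebra_simps)

definition qf :: "complex^'n^'n \<Rightarrow> complex^'n \<Rightarrow> real" where
  "qf X u = Im (hp u (X *v u))"

lemma quad0:
  fixes A B :: real
  assumes "\<And>t. 2*t*A + t^2*B \<le> 0"
  shows "A = 0"
proof (rule ccontr)
  assume A: "A \<noteq> 0"
  define c where "c = \<bar>B\<bar> + 1"
  define t where "t = A / c"
  have pos: "c > 0" unfolding c_def by simp
  have "2*t*A + t^2*B = A^2 / c^2 * (2*c + B)"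
    unfolding t_def using pos by (simp add: field_simps power2_eq_square)
  moreover have "A^2 / c^2 > 0" using A pos by simp
  moreover have "2*c + B > 0" unfolding c_def by (simp add: abs_if)
  ultimately have "2*t*A + t^2*B > 0" by (metis mult_pos_pos)
  then show False using assms[of t] by simp
qed

lemma Im_cnj_neg: "Im (- cnj z) = Im z" by simp

lemma qf_expand:
  assumes "X \<in> un"
  shows "qf X (u + t *\<^sub>R w) = qf X u + 2*t*Im (hp w (X *v u)) + t^2 * qf X w"
proof -
  have cross: "Im (hp u (X *v w)) = Im (hp w (X *v u))"
    using skew_hp[OF assms, of u w] hp_cnj[of w "X *v u"] by simp
  have "hp (u + t *\<^sub>R w) (X *v (u + t *\<^sub>R w)) =
        hp u (X *v u) + of_real t * hp u (X *v w) + of_real t * hp w (X *v u) + of_real (t^2) * hp w (X *v w)"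
    by (simp add: mv_add mv_scaleR hp_simps algebra_simps power2_eq_square)
  then show ?thesis unfolding qf_def using cross by (simp add: power2_eq_square)
qed

lemma nq_expand:
  "(norm (u + t *\<^sub>R w))^2 = (norm u)^2 + 2*t*Re (hp w u) + t^2 * (norm w)^2"
proof -
  have "complex_of_real ((norm (u + t *\<^sub>R w))^2) = hp (u + t *\<^sub>R w) (u + t *\<^sub>R w)"
    by (simp add: hp_self)
  also have "\<dots> = hp u u + of_real t * (hp u w + hp w u) + of_real (t^2) * hp w w"
    by (simp add: hp_simps algebra_simps power2_eq_square)
  also have "hp u w + hp w u = of_real (2 * Re (hp w u))"
    using hp_cnj[of u w] by (simp add: complex_eq_iff)
  finally have "complex_of_real ((norm (u + t *\<^sub>R w))^2) =
      complex_of_real ((norm u)^2 + 2*t*Re (hp w u) + t^2 * (norm w)^2)"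
    by (simp add: hp_self)
  then show ?thesis using of_real_eq_iff by blast
qed

lemma qf_scale: "qf X (c *\<^sub>R u) = c^2 * qf X u"
  unfolding qf_def by (simp add: mv_scaleR hp_simps power2_eq_square)

lemma qf_cont: "continuous_on S (qf X)"
proof -
  have "qf X = (\<lambda>u. Im (\<Sum>k\<in>UNIV. cnj (u$k) * (X *v u)$k))"
    unfolding qf_def hp_def by (rule ext) simp
  moreover have "continuous_on S (\<lambda>u. Im (\<Sum>k\<in>UNIV. cnj (u$k) * (X *v u)$k))"
    by (intro continuous_intros)
  ultimately show ?thesis by simp
qed

lemma eig_max:
  assumes X: "X \<in> un"
  shows "\<exists>u (\<mu>::real). u \<noteq> 0 \<and> X *v u = (\<i> * of_real \<mu>) *s u \<and> (\<forall>y. qf X y \<le> \<mu> * (norm y)^2)"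
proof -
  have ne: "sphere (0::complex^'n) 1 \<noteq> {}" by simp
  obtain u0 where u0: "u0 \<in> sphere 0 1" "\<And>y. y \<in> sphere 0 1 \<Longrightarrow> qf X y \<le> qf X u0"
    using continuous_attains_sup[OF compact_sphere ne qf_cont] by blast
  define \<mu> where "\<mu> = qf X u0"
  have nu: "norm u0 = 1" using u0(1) by simp
  have bound: "qf X y \<le> \<mu> * (norm y)^2" for y
  proof (cases "y = 0")
    case True then show ?thesis by (simp add: qf_def mv_zero)
  next
    case False
    define y' where "y' = (1 / norm y) *\<^sub>R y"
    have "y' \<in> sphere 0 1" unfolding y'_def using False by simp
    then have le: "qf X y' \<le> \<mu>" using u0(2) unfolding \<mu>_def by blast
    have "y = norm y *\<^sub>R y'" unfolding y'_def using False by simp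
    then have "qf X y = (norm y)^2 * qf X y'" by (metis qf_scale)
    then show ?thesis using le by (metis mult.commute mult_left_mono zero_le_power2)
  qed
  define d where "d = X *v u0 - (\<i> * of_real \<mu>) *s u0"
  have A0: "Im (hp w d) = 0" for w
  proof -
    have "2*t*(Im (hp w (X *v u0)) - \<mu> * Re (hp w u0)) + t^2 * (qf X w - \<mu> * (norm w)^2) \<le> 0" for t
    proof -
      have "qf X (u0 + t *\<^sub>R w) \<le> \<mu> * (norm (u0 + t *\<^sub>R w))^2" by (rule bound)
      then show ?thesis unfolding qf_expand[OF X] nq_expand nu \<mu>_def by (simp add: algebra_simps)
    qed
    then have "Im (hp w (X *v u0)) - \<mu> * Re (hp w u0) = 0" by (rule quad0)
    then show ?thesis unfolding d_def by (simp add: hp_simps)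
  qed
  have "Im (hp (\<i> *s d) d) = - ((norm d)^2)" by (simp add: hp_simps hp_self)
  then have "d = 0" using A0[of "\<i> *s d"] by simp
  then have "X *v u0 = (\<i> * of_real \<mu>) *s u0" unfolding d_def by simp
  moreover have "u0 \<noteq> 0" using nu by auto
  ultimately show ?thesis using bound by blast
qed

lemma eig_nz:
  assumes X: "X \<in> un" and nz: "X \<noteq> 0"
  shows "\<exists>u (\<mu>::real). u \<noteq> 0 \<and> \<mu> \<noteq> 0 \<and> X *v u = (\<i> * of_real \<mu>) *s u"
proof -
  obtain u1 \<mu>1 where 1: "u1 \<noteq> 0" "X *v u1 = (\<i> * of_real \<mu>1) *s u1" "\<And>y. qf X y \<le> \<mu>1 * (norm y)^2"
    using eig_max[OF X] by blast
  obtain u2 \<mu>2 where 2: "u2 \<noteq> 0" "(- X) *v u2 = (\<i> * of_real \<mu>2) *s u2" "\<And>y. qf (- X) y \<le> \<mu>2 * (norm y)^2"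
    using eig_max[OF un_neg[OF X]] by blast
  show ?thesis
  proof (cases "\<mu>1 = 0")
    case False then show ?thesis using 1 by blast
  next
    case m1: True
    show ?thesis
    proof (cases "\<mu>2 = 0")
      case False
      have "X *v u2 = (\<i> * of_real (- \<mu>2)) *s u2"
        using 2(2) by (simp add: mv_neg_mat vec_eq_iff) (metis minus_equation_iff)
      then show ?thesis using False 2(1) by (intro exI[of _ u2] exI[of _ "- \<mu>2"]) simp
    next
      case m2: True
      have q0: "qf X y = 0" for y
      proof -
        have "qf (- X) y = - qf X y" unfolding qf_def by (simp add: mv_neg_mat hp_neg2)
        then show ?thesis using 1(3)[of y] 2(3)[of y] m1 m2 by simp
      qed
      have "X *v y = 0" for y
      proof -
        have "Im (hp w (X *v y)) = 0" for w
          using qf_expand[OF X, of y 1 w] q0 by simp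
        from this[of "\<i> *s (X *v y)"] have "(norm (X *v y))^2 = 0"
          by (simp add: hp_simps hp_self)
        then show ?thesis by simp
      qed
      then have "X = 0" using matrix_eq[of X 0] by (simp add: mv_zero[symmetric] matrix_vector_mult_def vec_eq_iff)
      then show ?thesis using nz by simp
    qed
  qed
qed

lemma cscale: "(c::real) *\<^sub>R (z::complex) = of_real c * z" by (simp add: scaleR_conv_of_real)

lemma ker_subspace: "subspace {v. (X::complex^'n^'m) *v v = 0}"
  unfolding subspace_def by (simp add: mv_zero mv_add mv_scaleR)

definition mker :: "complex^'n^'n \<Rightarrow> nat" where
  "mker X = DIM(complex^'n) - dim {v. X *v v = 0}"

lemma mker_less:
  fixes X Y :: "complex^'n^'n"
  assumes "{v. X *v v = 0} \<subset> {v. Y *v v = 0}"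
  shows "mker Y < mker X"
proof -
  have "dim {v. X *v v = 0} < dim {v. Y *v v = 0}"
    using dim_psubset[of "{v. X *v v = 0}" "{v. Y *v v = 0}"] assms
      span_eq_iff[THEN iffD2, OF ker_subspace[of X]] span_eq_iff[THEN iffD2, OF ker_subspace[of Y]]
    by simp
  moreover have "dim {v. Y *v v = 0} \<le> DIM(complex^'n)"
    by (rule eucl.dim_subset_UNIV)
  ultimately show ?thesis unfolding mker_def by linarith
qed

lemma ip_mat_left:
  assumes X: "X \<in> un" and Xu: "X *v u = 0"
  shows "ip u ** X = 0"
proof -
  have Xc: "cnj (X$i$j) = - X$j$i" for i j
  proof -
    have "X$j$i = - cnj (X$i$j)" by (rule unD[OF X])
    then show ?thesis by simp
  qed
  have s: "(\<Sum>k\<in>UNIV. cnj (u$k) * X$k$j) = - cnj ((X *v u)$j)" for j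
    unfolding matrix_vector_mult_def by (simp add: Xc sum_negf[symmetric] mult.commute)
  have "(ip u ** X)$i$j = (\<i> * u$i / hp u u) * (\<Sum>k\<in>UNIV. cnj (u$k) * X$k$j)" for i j
    unfolding ip_def matrix_matrix_mult_def by (simp add: sum_distrib_left algebra_simps)
  then show ?thesis using s Xu by (simp add: vec_eq_iff)
qed

lemma ip_mat_right:
  assumes Xu: "(X::complex^'n^'n) *v u = 0"
  shows "X ** ip u = 0"
proof -
  have "(X ** ip u)$i$j = (\<i> * cnj (u$j) / hp u u) * (X *v u)$i" for i j
    unfolding ip_def matrix_matrix_mult_def matrix_vector_mult_def
    by (simp add: sum_distrib_left algebra_simps)
  then show ?thesis using Xu by (simp add: vec_eq_iff)
qed

lemma scaleR_mm_left: "(c *\<^sub>R A :: complex^'n^'n) ** B = c *\<^sub>R (A ** B)"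
  unfolding matrix_matrix_mult_def vec_eq_iff vector_scaleR_component
  by (simp add: scaleR_conv_of_real sum_distrib_left algebra_simps)
lemma scaleR_mm_right: "(A :: complex^'n^'n) ** (c *\<^sub>R B) = c *\<^sub>R (A ** B)"
  unfolding matrix_matrix_mult_def vec_eq_iff vector_scaleR_component
  by (simp add: scaleR_conv_of_real sum_distrib_left algebra_simps)

context qs2 begin

lemma rank1: assumes "x \<noteq> 0" shows "\<zeta> (c *s x, \<mu> *\<^sub>R ip x) = 0"
proof (cases "\<mu> = 0")
  case True then show ?thesis using nrm1 by simp
next
  case m: False
  show ?thesis
  proof (cases "c = 0")
    case True
    have "(c *s x, \<mu> *\<^sub>R ip x) = (0, \<mu> *\<^sub>R ip x)" using True by (simp add: vec_eq_iff)
    then show ?thesis using nrm2[OF un_scaleR[OF ip_un]] by metis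
  next
    case False
    define w where "w = (of_real (inverse \<mu>) * c) *s x"
    have eq: "(c *s x, \<mu> *\<^sub>R ip x) = \<mu> *\<^sub>R (w, ip x)"
      unfolding w_def using m by (simp add: vec_eq_iff cscale)
    have ipw: "ip w = ip x" unfolding w_def using False m by (simp add: ip_smult)
    have "\<zeta> (w, ip x) = 0" using vanish[of w] ipw unfolding h_def by simp
    then show ?thesis unfolding eq using qs_scale[of "(w, ip x)" \<mu>] by (simp add: ip_un)
  qed
qed

lemma main_zero: "X \<in> un \<Longrightarrow> \<zeta> (v, X) = 0"
proof (induction X arbitrary: v rule: measure_induct_rule[of mker])
  case (less X)
  show ?case
  proof (cases "X = 0")
    case True then show ?thesis using nrm1 by simp
  next
    case False
    obtain u \<mu> where u: "u \<noteq> 0" "\<mu> \<noteq> 0" "X *v u = (\<i> * of_real \<mu>) *s u"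
      using eig_nz[OF less.prems False] by blast
    define X' where "X' = X - \<mu> *\<^sub>R ip u"
    have X'un: "X' \<in> un" unfolding X'_def using less.prems by (simp add: un_diff un_scaleR ip_un)
    have X'u: "X' *v u = 0"
    proof -
      have "X' *v u = X *v u - \<mu> *\<^sub>R (ip u *v u)" unfolding X'_def by (simp add: mv_diff_mat mv_scaleR_mat)
      also have "\<dots> = (\<i> * of_real \<mu>) *s u - \<mu> *\<^sub>R (\<i> *s u)" using u by (simp add: ip_self)
      also have "\<dots> = 0" by (simp add: vec_eq_iff cscale)
      finally show ?thesis .
    qed
    have kerX: "hp u w = 0" if "X *v w = 0" for w
    proof -
      have "hp (X *v u) w = 0" using skew_hp[OF less.prems, of u w] that by simp
      then have "- (\<i> * of_real \<mu>) * hp u w = 0" using u(3) by (simp add: hp_smult1)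
      then show ?thesis using u(2) by simp
    qed
    have sub: "{w. X *v w = 0} \<subset> {w. X' *v w = 0}"
    proof
      show "{w. X *v w = 0} \<subseteq> {w. X' *v w = 0}"
        using kerX unfolding X'_def by (auto simp: mv_diff_mat mv_scaleR_mat ip_orth)
      have "X *v u \<noteq> 0" using u by (simp add: vec_eq_iff)
      then show "{w. X *v w = 0} \<noteq> {w. X' *v w = 0}" using X'u by blast
    qed
    have IH: "\<zeta> (v', X') = 0" for v' using less.IH[OF mker_less[OF sub] X'un] .
    define c where "c = hp u v / hp u u"
    define v' where "v' = v - c *s u"
    have huu: "hp u u \<noteq> 0" using u(1) hp_self_zero by blast
    have ov: "hp u v' = 0" unfolding v'_def c_def using huu by (simp add: hp_simps)
    have br: "gbracket (c *s u, \<mu> *\<^sub>R ip u) (v', X') = 0"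
      unfolding gbracket_def
      using ip_mat_left[OF X'un X'u] ip_mat_right[OF X'u] ov X'u
      by (simp add: mv_scaleR_mat mv_smult ip_orth scaleR_mm_left scaleR_mm_right zero_prod_def)
    have "(v, X) = (c *s u, \<mu> *\<^sub>R ip u) + (v', X')" unfolding v'_def X'_def by simp
    then have "\<zeta> (v, X) = \<zeta> (c *s u, \<mu> *\<^sub>R ip u) + \<zeta> (v', X')"
      using qs_add[OF _ _ br] X'un by (simp add: un_scaleR ip_un)
    then show ?thesis using rank1[OF u(1)] IH by simp
  qed
qed

end

lemma part1:
  fixes \<zeta> :: "(complex^'n) \<times> (complex^'n^'n) \<Rightarrow> real"
  assumes "CARD('n::finite) \<ge> 2" "continuous_on gn \<zeta>" "lie_quasi_state gn gbracket \<zeta>"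
    "\<forall>v. \<zeta> (v, 0) = 0" "\<forall>X\<in>un. \<zeta> (0, X) = 0"
  shows "\<forall>A\<in>gn. \<zeta> A = 0"
proof -
  interpret qs2 \<zeta>
    using assms by unfold_locales auto
  show ?thesis unfolding gn_def using main_zero by auto
qed

lemma part2:
  fixes \<zeta> :: "(complex^'n) \<times> (complex^'n^'n) \<Rightarrow> real"
  assumes card: "CARD('n::finite) \<ge> 2" and cont: "continuous_on gn \<zeta>"
    and lqs: "lie_quasi_state gn gbracket \<zeta>"
  shows "\<exists>(\<psi> :: complex^'n \<Rightarrow> real) (\<eta> :: complex^'n^'n \<Rightarrow> real).
                   linear \<psi> \<and> continuous_on un \<eta> \<and> lie_quasi_state un ubracket \<eta>
                   \<and> (\<forall>v. \<forall>X\<in>un. \<zeta> (v, X) = \<psi> v + \<eta> X)"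
proof -
  have add: "\<zeta> (a *\<^sub>R A + b *\<^sub>R B) = a * \<zeta> A + b * \<zeta> B"
    if "A \<in> gn" "B \<in> gn" "gbracket A B = 0" for A B a b
    using lqs that unfolding lie_quasi_state_def by blast
  have z00: "\<zeta> (0, 0) = 0"
    using add[of "(0,0)" "(0,0)" 0 0] gbracket_self[of "(0,0)"] un_zero by (simp add: zero_prod_def)
  define \<psi> where "\<psi> v = \<zeta> (v, 0)" for v
  define \<eta> where "\<eta> X = \<zeta> (0, X)" for X
  have br0: "gbracket (x, 0) (y, 0) = 0" for x y
    unfolding gbracket_def by (simp add: mv_neg_mat zero_prod_def matrix_matrix_mult_def matrix_vector_mult_def vec_eq_iff)
  have lin: "linear \<psi>"
  proof (rule linearI)
    fix x y
    show "\<psi> (x + y) = \<psi> x + \<psi> y"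
      using add[of "(x,0)" "(y,0)" 1 1] br0[of x y] un_zero unfolding \<psi>_def by simp
  next
    fix c :: real and x
    show "\<psi> (c *\<^sub>R x) = c *\<^sub>R \<psi> x"
      using add[of "(x,0)" "(x,0)" c 0] br0[of x x] un_zero unfolding \<psi>_def by simp
  qed
  have ct: "continuous_on un \<eta>"
  proof -
    have "continuous_on un (\<lambda>X. (0::complex^'n, X))" by (intro continuous_intros)
    moreover have "(\<lambda>X. (0::complex^'n, X)) ` un \<subseteq> gn" unfolding gn_def by auto
    ultimately have "continuous_on un (\<zeta> \<circ> (\<lambda>X. (0::complex^'n, X)))"
      using continuous_on_compose continuous_on_subset cont by blast
    then show ?thesis unfolding \<eta>_def o_def by simp
  qed
  have brX: "gbracket (0, X) (0, Y) = (0, ubracket X Y)" for X Y :: "complex^'n^'n"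
    unfolding gbracket_def ubracket_def by (simp add: mv_zero)
  have lqsu: "lie_quasi_state un ubracket \<eta>"
    unfolding lie_quasi_state_def
  proof (intro ballI impI allI)
    fix X Y :: "complex^'n^'n" and a b :: real assume XY: "X \<in> un" "Y \<in> un" "ubracket X Y = 0"
    show "\<eta> (a *\<^sub>R X + b *\<^sub>R Y) = a * \<eta> X + b * \<eta> Y"
      using add[of "(0,X)" "(0,Y)" a b] XY brX[of X Y] unfolding \<eta>_def by (simp add: zero_prod_def)
  qed
  define \<zeta>' where "\<zeta>' A = \<zeta> A - \<psi> (fst A) - \<eta> (snd A)" for A
  have ct': "continuous_on gn \<zeta>'"
  proof -
    have bl: "continuous_on UNIV \<psi>"
      by (rule linear_continuous_on) (use lin linear_conv_bounded_linear in blast)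
    have c1: "continuous_on gn (\<lambda>A. \<psi> (fst A))"
      by (rule continuous_on_compose2[OF bl continuous_on_fst[OF continuous_on_id]]) simp
    have c2: "continuous_on gn (\<lambda>A. \<eta> (snd A))"
      by (rule continuous_on_compose2[OF ct continuous_on_snd[OF continuous_on_id]]) (auto simp: gn_def)
    have "continuous_on gn (\<lambda>A. \<zeta> A - \<psi> (fst A) - \<eta> (snd A))"
      by (rule continuous_on_diff[OF continuous_on_diff[OF cont c1] c2])
    then show ?thesis unfolding \<zeta>'_def .
  qed
  have lqs': "lie_quasi_state gn gbracket \<zeta>'"
    unfolding lie_quasi_state_def
  proof (intro ballI impI allI)
    fix A B :: "(complex^'n) \<times> (complex^'n^'n)" and a b :: real assume AB: "A \<in> gn" "B \<in> gn" "gbracket A B = 0"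
    obtain v X w Y where A: "A = (v, X)" and B: "B = (w, Y)" by fastforce
    have XY: "X \<in> un" "Y \<in> un" using AB A B by auto
    have u: "ubracket X Y = 0" using AB(3) unfolding A B gbracket_def ubracket_def by (simp add: zero_prod_def)
    have "\<eta> (a *\<^sub>R X + b *\<^sub>R Y) = a * \<eta> X + b * \<eta> Y"
      using lqsu XY u unfolding lie_quasi_state_def by blast
    moreover have "\<psi> (a *\<^sub>R v + b *\<^sub>R w) = a * \<psi> v + b * \<psi> w"
      using lin by (simp add: linear_add linear_scale)
    ultimately show "\<zeta>' (a *\<^sub>R A + b *\<^sub>R B) = a * \<zeta>' A + b * \<zeta>' B"
      using add[OF AB] unfolding \<zeta>'_def A B by (simp add: algebra_simps)
  qed
  have n1: "\<forall>v. \<zeta>' (v, 0) = 0" unfolding \<zeta>'_def \<psi>_def \<eta>_def using z00 by simp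
  have n2: "\<forall>X\<in>un. \<zeta>' (0, X) = 0" unfolding \<zeta>'_def \<psi>_def \<eta>_def using z00 by simp
  have "\<forall>A\<in>gn. \<zeta>' A = 0" by (rule part1[OF card ct' lqs' n1 n2])
  have "\<forall>v. \<forall>X\<in>un. \<zeta> (v, X) = \<psi> v + \<eta> X"
  proof (intro allI ballI)
    fix v :: "complex^'n" and X :: "complex^'n^'n" assume "X \<in> un"
    then have "\<zeta>' (v, X) = 0" using \<open>\<forall>A\<in>gn. \<zeta>' A = 0\<close> by simp
    then show "\<zeta> (v, X) = \<psi> v + \<eta> X" unfolding \<zeta>'_def by simp
  qed
  then show ?thesis using lin ct lqsu by blast
qed

theorem mainTheorem17:
  assumes "CARD('n::finite) \<ge> 2"
  shows "(\<forall>\<zeta> :: (complex^'n) \<times> (complex^'n^'n) \<Rightarrow> real.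
            continuous_on gn \<zeta> \<and> lie_quasi_state gn gbracket \<zeta>
            \<and> (\<forall>v. \<zeta> (v, 0) = 0) \<and> (\<forall>X\<in>un. \<zeta> (0, X) = 0)
            \<longrightarrow> (\<forall>A\<in>gn. \<zeta> A = 0))
       \<and> (\<forall>\<zeta> :: (complex^'n) \<times> (complex^'n^'n) \<Rightarrow> real.
            continuous_on gn \<zeta> \<and> lie_quasi_state gn gbracket \<zeta>
            \<longrightarrow> (\<exists>(\<psi> :: complex^'n \<Rightarrow> real) (\<eta> :: complex^'n^'n \<Rightarrow> real).
                   linear \<psi> \<and> continuous_on un \<eta> \<and> lie_quasi_state un ubracket \<eta>
                   \<and> (\<forall>v. \<forall>X\<in>un. \<zeta> (v, X) = \<psi> v + \<eta> X)))"
  using part1[OF assms] part2[OF assms] by blast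

end
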